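(* Let $\xi,\eta,\zeta\colon\mathbb{R}\times(-\infty,\infty]\to\mathbb{R}$ be multiplicity functions, each with finite support avoiding the diagonal $\Delta=\{(x_1,x_2):x_1=x_2\}$. Then: (positivity) $W_1^{\pm}(\xi,\eta)\ge0$, and $W_1^{\pm}(\xi,\eta)>0$ if and only if $\xi\ne\eta$; (symmetry) $W_1^{\pm}(\xi,\eta)=W_1^{\pm}(\eta,\xi)$; (triangle inequality) $W_1^{\pm}(\xi,\eta)+W_1^{\pm}(\eta,\zeta)\ge W_1^{\pm}(\xi,\zeta)$.
   Context: The support of $f$ is the set of points where $f\ne0$. For $x=(x_1,x_2),y=(y_1,y_2)\in\mathbb{R}\times(-\infty,\infty]$ let $\|x-y\|_1=|x_1-y_1|+|x_2-y_2|$ (with $|\infty-\infty|=0$ and $|\infty-a|=\infty$ for real $a$) and $\delta(x)=|x_2-x_1|$. For non-negative $\xi,\eta$ with finite supports, the $1$-Wasserstein distance is $W_1(\xi,\eta)=\inf_{T,X,Y}\big[\sum_{x,y}T(x,y)\|x-y\|_1+\sum_xX(x)\delta(x)+\sum_yY(y)\delta(y)\big]$ over $T\colon\mathrm{supp}\,\xi\times\mathrm{supp}\,\eta\to[0,\infty)$, $X\colon\mathrm{supp}\,\xi\to[0,\infty)$, $Y\colon\mathrm{supp}\,\eta\to[0,\infty)$ with $X(x)+\sum_{y}T(x,y)=\xi(x)$ and $Y(y)+\sum_xT(x,y)=\eta(y)$ for all $x\in\mathrm{supp}\,\xi$, $y\in\mathrm{supp}\,\eta$. For arbitrary $\xi=\xi^+-\xi^-$,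 $\eta=\eta^+-\eta^-$ with $\xi^\pm,\eta^\pm$ non-negative, the alternating $1$-Wasserstein distance is $W_1^{\pm}(\xi,\eta)=W_1(\xi^++\eta^-,\xi^-+\eta^+)$ (independent of the decomposition). Values $\infty$ are allowed (extended metric). *)

theory Defs
  imports "HOL-Analysis.Analysis" "HOL-Library.Extended_Real"
begin

text \<open>Points of R x (-infinity, infinity]: pairs (x1, x2) with x2 an extended real;
  the value -infinity is excluded by the support hypotheses below.\<close>
type_synonym pt = "real \<times> ereal"

definition supp :: "(pt \<Rightarrow> real) \<Rightarrow> pt set" where
  "supp f = {x. f x \<noteq> 0}"

text \<open>l1 distance with |inf - inf| = 0 and |inf - a| = inf.\<close>
definition dist1 :: "pt \<Rightarrow> pt \<Rightarrow> ereal" where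
  "dist1 x y = ereal \<bar>fst x - fst y\<bar> +
     (if snd x = snd y then 0 else \<bar>snd x - snd y\<bar>)"

definition delta :: "pt \<Rightarrow> ereal" where
  "delta x = \<bar>snd x - ereal (fst x)\<bar>"

definition W1 :: "(pt \<Rightarrow> real) \<Rightarrow> (pt \<Rightarrow> real) \<Rightarrow> ereal" where
  "W1 \<xi> \<eta> = Inf {(\<Sum>(x,y)\<in>supp \<xi> \<times> supp \<eta>. ereal (T x y) * dist1 x y)
                  + (\<Sum>x\<in>supp \<xi>. ereal (X x) * delta x)
                  + (\<Sum>y\<in>supp \<eta>. ereal (Y y) * delta y) | T X Y.
        (\<forall>x\<in>supp \<xi>. \<forall>y\<in>supp \<eta>. T x y \<ge> 0) \<and>
        (\<forall>x\<in>supp \<xi>. X x \<ge> 0) \<and> (\<forall>y\<in>supp \<eta>. Y y \<ge> 0) \<and>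
        (\<forall>x\<in>supp \<xi>. X x + (\<Sum>y\<in>supp \<eta>. T x y) = \<xi> x) \<and>
        (\<forall>y\<in>supp \<eta>. Y y + (\<Sum>x\<in>supp \<xi>. T x y) = \<eta> y)}"

definition pospart :: "(pt \<Rightarrow> real) \<Rightarrow> pt \<Rightarrow> real" where
  "pospart f = (\<lambda>x. max (f x) 0)"

definition negpart :: "(pt \<Rightarrow> real) \<Rightarrow> pt \<Rightarrow> real" where
  "negpart f = (\<lambda>x. max (- f x) 0)"

definition W1pm :: "(pt \<Rightarrow> real) \<Rightarrow> (pt \<Rightarrow> real) \<Rightarrow> ereal" where
  "W1pm \<xi> \<eta> = W1 (\<lambda>x. pospart \<xi> x + negpart \<eta> x) (\<lambda>x. negpart \<xi> x + pospart \<eta> x)"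

definition admissible :: "(pt \<Rightarrow> real) \<Rightarrow> bool" where
  "admissible f \<longleftrightarrow> finite (supp f) \<and>
     (\<forall>x\<in>supp f. snd x \<noteq> -\<infinity> \<and> snd x \<noteq> ereal (fst x))"

end

theory Submission imports Defs begin

declare split_paired_All[simp del] split_paired_Ex[simp del]

lemma d2_tri: "(if (a::ereal) = c then 0 else \<bar>a - c\<bar>) \<le> (if a = b then 0 else \<bar>a - b\<bar>) + (if b = c then 0 else \<bar>b - c\<bar>)"
  by (cases a; cases b; cases c) auto

lemma d2_nonneg: "(0::ereal) \<le> (if (a::ereal) = c then 0 else \<bar>a - c\<bar>)"
  by auto

lemma dist1_nonneg: "0 \<le> dist1 x y"
  unfolding dist1_def by (auto intro: add_nonneg_nonneg)

lemma dist1_tri: "dist1 x z \<le> dist1 x y + dist1 y z"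
proof -
  have "ereal \<bar>fst x - fst z\<bar> \<le> ereal \<bar>fst x - fst y\<bar> + ereal \<bar>fst y - fst z\<bar>" by simp
  then show ?thesis unfolding dist1_def using d2_tri[of "snd x" "snd z" "snd y"]
    by (smt (verit) add.assoc add.commute add_mono)
qed

lemma delta_tri: "delta x \<le> dist1 x y + delta y"
  unfolding delta_def dist1_def
  by (cases "snd x"; cases "snd y") (auto simp: abs_ereal.simps)

lemma dist1_sym: "dist1 x y = dist1 y x"
  unfolding dist1_def by (cases "snd x"; cases "snd y") (auto simp: abs_minus_commute)

lemma dist1_self: "dist1 x x = 0"
  unfolding dist1_def by simp

lemma dist1_pos: "x \<noteq> y \<Longrightarrow> 0 < dist1 x y"
  unfolding dist1_def by (cases x; cases y; cases "snd x"; cases "snd y") auto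


definition dE :: "pt \<Rightarrow> pt \<Rightarrow> ennreal" where "dE x y = e2ennreal (dist1 x y)"
definition lE :: "pt \<Rightarrow> ennreal" where "lE x = e2ennreal (delta x)"

lemma e2ennreal_add: "0 \<le> a \<Longrightarrow> 0 \<le> b \<Longrightarrow> e2ennreal (a + b) = e2ennreal a + e2ennreal b"
  by (metis e2ennreal_enn2ereal enn2ereal_e2ennreal plus_ennreal.rep_eq)

lemma delta_nonneg: "0 \<le> delta x" unfolding delta_def by simp

lemma dE_tri: "dE x z \<le> dE x y + dE y z"
  unfolding dE_def using dist1_tri[of x z y]
  by (metis dist1_nonneg e2ennreal_add e2ennreal_mono)

lemma lE_tri: "lE x \<le> dE x y + lE y"
  unfolding dE_def lE_def using delta_tri[of x y]
  by (metis dist1_nonneg delta_nonneg e2ennreal_add e2ennreal_mono)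

lemma lE_tri': "lE y \<le> lE x + dE x y"
  using lE_tri[of y x] dist1_sym[of x y] unfolding dE_def by (simp add: add.commute)

lemma dE_sym: "dE x y = dE y x" unfolding dE_def using dist1_sym by simp
lemma dE_self[simp]: "dE x x = 0" unfolding dE_def dist1_self using e2ennreal_neg[of 0] by simp
lemma e2ennreal_pos: "0 < a \<Longrightarrow> 0 < e2ennreal a"
  by (cases a) auto
lemma dE_pos: "x \<noteq> y \<Longrightarrow> 0 < dE x y"
  unfolding dE_def using dist1_pos[of x y] e2ennreal_pos by blast
lemma delta_pos: "snd x \<noteq> ereal (fst x) \<Longrightarrow> 0 < delta x"
  unfolding delta_def by (cases "snd x") auto
lemma lE_pos: "snd x \<noteq> ereal (fst x) \<Longrightarrow> 0 < lE x"
  unfolding lE_def using delta_pos e2ennreal_pos by blast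

definition planAB :: "pt set \<Rightarrow> pt set \<Rightarrow> (pt \<Rightarrow> real) \<Rightarrow> (pt \<Rightarrow> real) \<Rightarrow> (pt \<Rightarrow> pt \<Rightarrow> real) \<Rightarrow> (pt \<Rightarrow> real) \<Rightarrow> (pt \<Rightarrow> real) \<Rightarrow> bool" where
  "planAB A B \<mu> \<nu> T X Y \<longleftrightarrow> (\<forall>x\<in>A. \<forall>y\<in>B. 0 \<le> T x y) \<and> (\<forall>x\<in>A. 0 \<le> X x) \<and> (\<forall>y\<in>B. 0 \<le> Y y) \<and>
     (\<forall>x\<in>A. X x + (\<Sum>y\<in>B. T x y) = \<mu> x) \<and> (\<forall>y\<in>B. Y y + (\<Sum>x\<in>A. T x y) = \<nu> y)"

definition costE :: "pt set \<Rightarrow> pt set \<Rightarrow> (pt \<Rightarrow> pt \<Rightarrow> real) \<Rightarrow> (pt \<Rightarrow> real) \<Rightarrow> (pt \<Rightarrow> real) \<Rightarrow> ennreal" where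
  "costE A B T X Y = (\<Sum>(x,y)\<in>A \<times> B. ennreal (T x y) * dE x y) + (\<Sum>x\<in>A. ennreal (X x) * lE x)
     + (\<Sum>y\<in>B. ennreal (Y y) * lE y)"

definition WE :: "pt set \<Rightarrow> pt set \<Rightarrow> (pt \<Rightarrow> real) \<Rightarrow> (pt \<Rightarrow> real) \<Rightarrow> ennreal" where
  "WE A B \<mu> \<nu> = Inf {costE A B T X Y | T X Y. planAB A B \<mu> \<nu> T X Y}"

lemma term_conv: "0 \<le> t \<Longrightarrow> 0 \<le> d \<Longrightarrow> ereal t * d = enn2ereal (ennreal t * e2ennreal d)"
  by (simp add: times_ennreal.rep_eq enn2ereal_e2ennreal)

lemma sum_conv:
  assumes "\<And>i. i \<in> I \<Longrightarrow> 0 \<le> t i" "\<And>i. 0 \<le> d i"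
  shows "(\<Sum>i\<in>I. ereal (t i) * d i) = enn2ereal (\<Sum>i\<in>I. ennreal (t i) * e2ennreal (d i))"
proof -
  have "(\<Sum>i\<in>I. ereal (t i) * d i) = (\<Sum>i\<in>I. enn2ereal (ennreal (t i) * e2ennreal (d i)))"
    by (rule sum.cong[OF refl]) (rule term_conv[OF assms(1) assms(2)])
  also have "\<dots> = enn2ereal (\<Sum>i\<in>I. ennreal (t i) * e2ennreal (d i))"
    by (rule sum_enn2ereal) simp
  finally show ?thesis .
qed


lemma cost_conv:
  assumes "planAB A B \<mu> \<nu> T X Y"
  shows "(\<Sum>(x,y)\<in>A \<times> B. ereal (T x y) * dist1 x y) + (\<Sum>x\<in>A. ereal (X x) * delta x)
     + (\<Sum>y\<in>B. ereal (Y y) * delta y) = enn2ereal (costE A B T X Y)"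
proof -
  have 1: "(\<Sum>(x,y)\<in>A \<times> B. ereal (T x y) * dist1 x y) = enn2ereal (\<Sum>(x,y)\<in>A \<times> B. ennreal (T x y) * dE x y)"
  proof -
    have "(\<Sum>i\<in>A \<times> B. ereal ((\<lambda>(x,y). T x y) i) * (\<lambda>(x,y). dist1 x y) i)
       = enn2ereal (\<Sum>i\<in>A \<times> B. ennreal ((\<lambda>(x,y). T x y) i) * e2ennreal ((\<lambda>(x,y). dist1 x y) i))"
      by (rule sum_conv) (use assms in \<open>auto simp: planAB_def dist1_nonneg\<close>)
    then show ?thesis unfolding dE_def by (simp add: split_def)
  qed
  have 2: "(\<Sum>x\<in>A. ereal (X x) * delta x) = enn2ereal (\<Sum>x\<in>A. ennreal (X x) * lE x)"
    unfolding lE_def by (rule sum_conv) (use assms in \<open>auto simp: planAB_def delta_nonneg\<close>)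
  have 3: "(\<Sum>y\<in>B. ereal (Y y) * delta y) = enn2ereal (\<Sum>y\<in>B. ennreal (Y y) * lE y)"
    unfolding lE_def by (rule sum_conv) (use assms in \<open>auto simp: planAB_def delta_nonneg\<close>)
  show ?thesis unfolding costE_def 1 2 3 by (simp only: plus_ennreal.rep_eq)
qed

lemma W1_WE: "W1 \<mu> \<nu> = enn2ereal (WE (supp \<mu>) (supp \<nu>) \<mu> \<nu>)"
proof -
  have "{(\<Sum>(x,y)\<in>supp \<mu> \<times> supp \<nu>. ereal (T x y) * dist1 x y)
                  + (\<Sum>x\<in>supp \<mu>. ereal (X x) * delta x)
                  + (\<Sum>y\<in>supp \<nu>. ereal (Y y) * delta y) | T X Y.
        (\<forall>x\<in>supp \<mu>. \<forall>y\<in>supp \<nu>. T x y \<ge> 0) \<and>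
        (\<forall>x\<in>supp \<mu>. X x \<ge> 0) \<and> (\<forall>y\<in>supp \<nu>. Y y \<ge> 0) \<and>
        (\<forall>x\<in>supp \<mu>. X x + (\<Sum>y\<in>supp \<nu>. T x y) = \<mu> x) \<and>
        (\<forall>y\<in>supp \<nu>. Y y + (\<Sum>x\<in>supp \<mu>. T x y) = \<nu> y)}
     = enn2ereal ` {costE (supp \<mu>) (supp \<nu>) T X Y | T X Y. planAB (supp \<mu>) (supp \<nu>) \<mu> \<nu> T X Y}"
    (is "?L = ?R")
  proof
    show "?L \<subseteq> ?R"
    proof
      fix z assume "z \<in> ?L"
      then obtain T X Y where "planAB (supp \<mu>) (supp \<nu>) \<mu> \<nu> T X Y"
        "z = (\<Sum>(x,y)\<in>supp \<mu> \<times> supp \<nu>. ereal (T x y) * dist1 x y)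
                  + (\<Sum>x\<in>supp \<mu>. ereal (X x) * delta x)
                  + (\<Sum>y\<in>supp \<nu>. ereal (Y y) * delta y)" unfolding planAB_def by blast
      then show "z \<in> ?R" using cost_conv by blast
    qed
    show "?R \<subseteq> ?L"
    proof
      fix z assume "z \<in> ?R"
      then obtain T X Y where p: "planAB (supp \<mu>) (supp \<nu>) \<mu> \<nu> T X Y"
        "z = enn2ereal (costE (supp \<mu>) (supp \<nu>) T X Y)" by blast
      have "z = (\<Sum>(x,y)\<in>supp \<mu> \<times> supp \<nu>. ereal (T x y) * dist1 x y)
                  + (\<Sum>x\<in>supp \<mu>. ereal (X x) * delta x)
                  + (\<Sum>y\<in>supp \<nu>. ereal (Y y) * delta y)" using cost_conv[OF p(1)] p(2) by simp
      then show "z \<in> ?L" using p(1) unfolding planAB_def by blast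
    qed
  qed
  then show ?thesis unfolding W1_def WE_def by (simp add: Inf_ennreal.rep_eq)
qed


lemma supp_iff: "x \<notin> supp f \<longleftrightarrow> f x = 0" unfolding supp_def by auto

lemma sum_prod_neutral:
  assumes "finite A'" "finite B'" "A \<subseteq> A'" "B \<subseteq> B'"
    and "\<And>x y. x \<in> A' \<Longrightarrow> y \<in> B' \<Longrightarrow> \<not> (x \<in> A \<and> y \<in> B) \<Longrightarrow> f x y = 0"
    and "\<And>x y. x \<in> A \<Longrightarrow> y \<in> B \<Longrightarrow> f x y = g x y"
  shows "(\<Sum>(x,y)\<in>A' \<times> B'. f x y) = (\<Sum>(x,y)\<in>A \<times> B. g x y)"
proof (rule sum.mono_neutral_cong_right)
  show "\<forall>i\<in>A' \<times> B' - A \<times> B. (case i of (x, y) \<Rightarrow> f x y) = 0"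
    using assms(5) by auto
qed (use assms in auto)

lemma plan_extend:
  assumes fin: "finite A'" "finite B'" and sub: "A \<subseteq> A'" "B \<subseteq> B'"
    and sp: "supp \<mu> \<subseteq> A" "supp \<nu> \<subseteq> B" and p: "planAB A B \<mu> \<nu> T X Y"
  defines "T' \<equiv> (\<lambda>x y. if x \<in> A \<and> y \<in> B then T x y else 0)"
    and "X' \<equiv> (\<lambda>x. if x \<in> A then X x else 0)" and "Y' \<equiv> (\<lambda>y. if y \<in> B then Y y else 0)"
  shows "planAB A' B' \<mu> \<nu> T' X' Y' \<and> costE A' B' T' X' Y' = costE A B T X Y"
proof -
  have row: "X' x + (\<Sum>y\<in>B'. T' x y) = \<mu> x" if "x \<in> A'" for x
  proof (cases "x \<in> A")
    case True
    have "(\<Sum>y\<in>B'. T' x y) = (\<Sum>y\<in>B. T x y)"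
      by (rule sum.mono_neutral_cong_right) (use fin sub True in \<open>auto simp: T'_def\<close>)
    then show ?thesis using p True unfolding planAB_def X'_def by auto
  next
    case False
    then have "\<mu> x = 0" using sp supp_iff by blast
    then show ?thesis using False by (simp add: X'_def T'_def)
  qed
  have col: "Y' y + (\<Sum>x\<in>A'. T' x y) = \<nu> y" if "y \<in> B'" for y
  proof (cases "y \<in> B")
    case True
    have "(\<Sum>x\<in>A'. T' x y) = (\<Sum>x\<in>A. T x y)"
      by (rule sum.mono_neutral_cong_right) (use fin sub True in \<open>auto simp: T'_def\<close>)
    then show ?thesis using p True unfolding planAB_def Y'_def by auto
  next
    case False
    then have "\<nu> y = 0" using sp supp_iff by blast
    then show ?thesis using False by (simp add: Y'_def T'_def)
  qed
  have pl: "planAB A' B' \<mu> \<nu> T' X' Y'"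
    using p row col unfolding planAB_def T'_def X'_def Y'_def by auto
  have c1: "(\<Sum>(x,y)\<in>A' \<times> B'. ennreal (T' x y) * dE x y) = (\<Sum>(x,y)\<in>A \<times> B. ennreal (T x y) * dE x y)"
    by (rule sum_prod_neutral) (use fin sub in \<open>auto simp: T'_def\<close>)
  have c2: "(\<Sum>x\<in>A'. ennreal (X' x) * lE x) = (\<Sum>x\<in>A. ennreal (X x) * lE x)"
    by (rule sum.mono_neutral_cong_right) (use fin sub in \<open>auto simp: X'_def\<close>)
  have c3: "(\<Sum>y\<in>B'. ennreal (Y' y) * lE y) = (\<Sum>y\<in>B. ennreal (Y y) * lE y)"
    by (rule sum.mono_neutral_cong_right) (use fin sub in \<open>auto simp: Y'_def\<close>)
  show ?thesis using pl c1 c2 c3 unfolding costE_def by simp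
qed

lemma plan_restrict:
  assumes fin: "finite A'" "finite B'" and sub: "A \<subseteq> A'" "B \<subseteq> B'"
    and sp: "supp \<mu> \<subseteq> A" "supp \<nu> \<subseteq> B" and p: "planAB A' B' \<mu> \<nu> T X Y"
  shows "planAB A B \<mu> \<nu> T X Y \<and> costE A B T X Y = costE A' B' T X Y"
proof -
  have zr: "X x = 0 \<and> (\<forall>y\<in>B'. T x y = 0)" if "x \<in> A'" "x \<notin> A" for x
  proof -
    have "\<mu> x = 0" using that sp supp_iff by blast
    then have e: "X x + (\<Sum>y\<in>B'. T x y) = 0" using p that unfolding planAB_def by auto
    have n1: "0 \<le> X x" and n2: "\<forall>y\<in>B'. 0 \<le> T x y" using p that unfolding planAB_def by auto
    then have "0 \<le> (\<Sum>y\<in>B'. T x y)" by (simp add: sum_nonneg)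
    then have "X x = 0" "(\<Sum>y\<in>B'. T x y) = 0" using e n1 by linarith+
    then show ?thesis using sum_nonneg_eq_0_iff[OF fin(2), of "\<lambda>y. T x y"] n2 by simp
  qed
  have zc: "Y y = 0 \<and> (\<forall>x\<in>A'. T x y = 0)" if "y \<in> B'" "y \<notin> B" for y
  proof -
    have "\<nu> y = 0" using that sp supp_iff by blast
    then have e: "Y y + (\<Sum>x\<in>A'. T x y) = 0" using p that unfolding planAB_def by auto
    have n1: "0 \<le> Y y" and n2: "\<forall>x\<in>A'. 0 \<le> T x y" using p that unfolding planAB_def by auto
    then have "0 \<le> (\<Sum>x\<in>A'. T x y)" by (simp add: sum_nonneg)
    then have "Y y = 0" "(\<Sum>x\<in>A'. T x y) = 0" using e n1 by linarith+
    then show ?thesis using sum_nonneg_eq_0_iff[OF fin(1), of "\<lambda>x. T x y"] n2 by simp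
  qed
  have row: "X x + (\<Sum>y\<in>B. T x y) = \<mu> x" if "x \<in> A" for x
  proof -
    have "(\<Sum>y\<in>B'. T x y) = (\<Sum>y\<in>B. T x y)"
      by (rule sum.mono_neutral_cong_right) (use fin sub zc that in auto)
    moreover have "x \<in> A'" using that sub by blast
    then have "X x + (\<Sum>y\<in>B'. T x y) = \<mu> x" using p unfolding planAB_def by blast
    ultimately show ?thesis by simp
  qed
  have col: "Y y + (\<Sum>x\<in>A. T x y) = \<nu> y" if "y \<in> B" for y
  proof -
    have "(\<Sum>x\<in>A'. T x y) = (\<Sum>x\<in>A. T x y)"
      by (rule sum.mono_neutral_cong_right) (use fin sub zr that in auto)
    moreover have "y \<in> B'" using that sub by blast
    then have "Y y + (\<Sum>x\<in>A'. T x y) = \<nu> y" using p unfolding planAB_def by blast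
    ultimately show ?thesis by simp
  qed
  have pl: "planAB A B \<mu> \<nu> T X Y" unfolding planAB_def
  proof (intro conjI)
    show "\<forall>x\<in>A. \<forall>y\<in>B. 0 \<le> T x y" using p sub unfolding planAB_def by blast
    show "\<forall>x\<in>A. 0 \<le> X x" using p sub unfolding planAB_def by blast
    show "\<forall>y\<in>B. 0 \<le> Y y" using p sub unfolding planAB_def by blast
  qed (use row col in auto)
  have c1: "(\<Sum>(x,y)\<in>A' \<times> B'. ennreal (T x y) * dE x y) = (\<Sum>(x,y)\<in>A \<times> B. ennreal (T x y) * dE x y)"
    by (rule sum_prod_neutral) (use fin sub zr zc in auto)
  have c2: "(\<Sum>x\<in>A'. ennreal (X x) * lE x) = (\<Sum>x\<in>A. ennreal (X x) * lE x)"
    by (rule sum.mono_neutral_cong_right) (use fin sub zr in auto)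
  have c3: "(\<Sum>y\<in>B'. ennreal (Y y) * lE y) = (\<Sum>y\<in>B. ennreal (Y y) * lE y)"
    by (rule sum.mono_neutral_cong_right) (use fin sub zc in auto)
  show ?thesis using pl c1 c2 c3 unfolding costE_def by simp
qed

lemma WE_enlarge:
  assumes fin: "finite A'" "finite B'" and sub: "A \<subseteq> A'" "B \<subseteq> B'"
    and sp: "supp \<mu> \<subseteq> A" "supp \<nu> \<subseteq> B"
  shows "WE A B \<mu> \<nu> = WE A' B' \<mu> \<nu>"
  unfolding WE_def
proof (rule antisym; rule Inf_mono)
  fix b assume "b \<in> {costE A' B' T X Y |T X Y. planAB A' B' \<mu> \<nu> T X Y}"
  then obtain T X Y where "planAB A' B' \<mu> \<nu> T X Y" "b = costE A' B' T X Y" by blast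
  then show "\<exists>a\<in>{costE A B T X Y |T X Y. planAB A B \<mu> \<nu> T X Y}. a \<le> b"
    using plan_restrict[OF fin sub sp] by fastforce
next
  fix b assume "b \<in> {costE A B T X Y |T X Y. planAB A B \<mu> \<nu> T X Y}"
  then obtain T X Y where p: "planAB A B \<mu> \<nu> T X Y" "b = costE A B T X Y" by blast
  show "\<exists>a\<in>{costE A' B' T X Y |T X Y. planAB A' B' \<mu> \<nu> T X Y}. a \<le> b"
    using plan_extend[OF fin sub sp p(1)] p(2) by fastforce
qed


lemma ennreal_lt_add: "(y::ennreal) < top \<Longrightarrow> 0 < d \<Longrightarrow> y < y + ennreal d"
  by (cases y rule: ennreal_cases) (auto simp flip: ennreal_plus intro!: ennreal_lessI)

lemma inf_add_le:
  fixes x :: ennreal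
  assumes "\<And>a b. a \<in> A \<Longrightarrow> b \<in> B \<Longrightarrow> x \<le> a + b"
  shows "x \<le> Inf A + Inf B"
proof (rule ennreal_le_epsilon)
  fix e :: real assume lt: "Inf A + Inf B < top" and e: "0 < e"
  have tA: "Inf A < top" and tB: "Inf B < top" using lt by (auto simp: top_unique)
  have "Inf A < Inf A + ennreal (e/2)" using ennreal_lt_add[OF tA] e by simp
  then obtain a where a: "a \<in> A" "a < Inf A + ennreal (e/2)" by (auto simp: Inf_less_iff)
  have "Inf B < Inf B + ennreal (e/2)" using ennreal_lt_add[OF tB] e by simp
  then obtain b where b: "b \<in> B" "b < Inf B + ennreal (e/2)" by (auto simp: Inf_less_iff)
  have "x \<le> a + b" using assms a b by blast
  also have "\<dots> \<le> (Inf A + ennreal (e/2)) + (Inf B + ennreal (e/2))"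
    using a b by (intro add_mono) auto
  also have "\<dots> = Inf A + Inf B + (ennreal (e/2) + ennreal (e/2))" by (simp add: ac_simps)
  also have "ennreal (e/2) + ennreal (e/2) = ennreal e" using e by (simp flip: ennreal_plus)
  finally show "x \<le> Inf A + Inf B + ennreal e" .
qed

abbreviation WS :: "pt set \<Rightarrow> (pt \<Rightarrow> real) \<Rightarrow> (pt \<Rightarrow> real) \<Rightarrow> ennreal" where
  "WS S \<equiv> WE S S"

lemma WE_le: "planAB A B \<mu> \<nu> T X Y \<Longrightarrow> WE A B \<mu> \<nu> \<le> costE A B T X Y"
  unfolding WE_def by (rule Inf_lower) blast

lemma WE_ge: "(\<And>T X Y. planAB A B \<mu> \<nu> T X Y \<Longrightarrow> c \<le> costE A B T X Y) \<Longrightarrow> c \<le> WE A B \<mu> \<nu>"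
  unfolding WE_def by (rule Inf_greatest) blast

lemma WS_self:
  assumes "finite S" "\<forall>x\<in>S. 0 \<le> \<mu> x"
  shows "WS S \<mu> \<mu> = 0"
proof -
  define T where "T = (\<lambda>x y. if x = y then \<mu> x else (0::real))"
  have p: "planAB S S \<mu> \<mu> T (\<lambda>_. 0) (\<lambda>_. 0)"
    unfolding planAB_def T_def using assms by (auto simp: sum.delta sum.delta')
  have "costE S S T (\<lambda>_. 0) (\<lambda>_. 0) = 0"
    unfolding costE_def T_def by (auto intro!: sum.neutral)
  then show ?thesis using WE_le[OF p] by simp
qed

lemma WS_sym_le:
  assumes "finite S"
  shows "WS S \<nu> \<mu> \<le> WS S \<mu> \<nu>"
proof (rule WE_ge)
  fix T X Y assume p: "planAB S S \<mu> \<nu> T X Y"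
  have p': "planAB S S \<nu> \<mu> (\<lambda>x y. T y x) Y X" using p unfolding planAB_def by auto
  have "(\<Sum>(x,y)\<in>S \<times> S. ennreal (T y x) * dE x y) = (\<Sum>(x,y)\<in>S \<times> S. ennreal (T x y) * dE x y)"
  proof -
    have "(\<Sum>(x,y)\<in>S \<times> S. ennreal (T y x) * dE x y) = (\<Sum>x\<in>S. \<Sum>y\<in>S. ennreal (T y x) * dE x y)"
      by (simp add: sum.cartesian_product)
    also have "\<dots> = (\<Sum>y\<in>S. \<Sum>x\<in>S. ennreal (T y x) * dE x y)" by (rule sum.swap)
    also have "\<dots> = (\<Sum>(y,x)\<in>S \<times> S. ennreal (T y x) * dE y x)"
      by (simp add: sum.cartesian_product dE_sym)
    finally show ?thesis .
  qed
  then have "costE S S (\<lambda>x y. T y x) Y X = costE S S T X Y" unfolding costE_def by (simp add: ac_simps)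
  then show "WS S \<nu> \<mu> \<le> costE S S T X Y" using WE_le[OF p'] by simp
qed

lemma WS_sym: "finite S \<Longrightarrow> WS S \<mu> \<nu> = WS S \<nu> \<mu>"
  by (simp add: WS_sym_le antisym)

lemma WS_add:
  assumes "finite S"
  shows "WS S (\<lambda>x. a x + b x) (\<lambda>x. c x + d x) \<le> WS S a c + WS S b d"
proof -
  have "WS S (\<lambda>x. a x + b x) (\<lambda>x. c x + d x) \<le> Inf {costE S S T X Y |T X Y. planAB S S a c T X Y}
     + Inf {costE S S T X Y |T X Y. planAB S S b d T X Y}"
proof (rule inf_add_le)
  fix u v
  assume "u \<in> {costE S S T X Y |T X Y. planAB S S a c T X Y}" "v \<in> {costE S S T X Y |T X Y. planAB S S b d T X Y}"
  then obtain T1 X1 Y1 T2 X2 Y2 where p1: "planAB S S a c T1 X1 Y1" "u = costE S S T1 X1 Y1"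
    and p2: "planAB S S b d T2 X2 Y2" "v = costE S S T2 X2 Y2" by blast
  have p: "planAB S S (\<lambda>x. a x + b x) (\<lambda>x. c x + d x) (\<lambda>x y. T1 x y + T2 x y) (\<lambda>x. X1 x + X2 x) (\<lambda>x. Y1 x + Y2 x)"
    unfolding planAB_def
  proof (intro conjI ballI)
    fix x assume "x \<in> S"
    then have "X1 x + (\<Sum>y\<in>S. T1 x y) = a x" "X2 x + (\<Sum>y\<in>S. T2 x y) = b x"
      using p1(1) p2(1) unfolding planAB_def by auto
    then show "X1 x + X2 x + (\<Sum>y\<in>S. T1 x y + T2 x y) = a x + b x" by (simp add: sum.distrib)
  next
    fix y assume "y \<in> S"
    then have "Y1 y + (\<Sum>x\<in>S. T1 x y) = c y" "Y2 y + (\<Sum>x\<in>S. T2 x y) = d y"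
      using p1(1) p2(1) unfolding planAB_def by auto
    then show "Y1 y + Y2 y + (\<Sum>x\<in>S. T1 x y + T2 x y) = c y + d y" by (simp add: sum.distrib)
  qed (use p1(1) p2(1) in \<open>auto simp: planAB_def\<close>)
  have "costE S S (\<lambda>x y. T1 x y + T2 x y) (\<lambda>x. X1 x + X2 x) (\<lambda>x. Y1 x + Y2 x) = u + v"
  proof -
    have e1: "(\<Sum>(x,y)\<in>S \<times> S. ennreal (T1 x y + T2 x y) * dE x y) =
      (\<Sum>(x,y)\<in>S \<times> S. ennreal (T1 x y) * dE x y) + (\<Sum>(x,y)\<in>S \<times> S. ennreal (T2 x y) * dE x y)"
      unfolding sum.distrib[symmetric]
      by (rule sum.cong) (use p1(1) p2(1) in \<open>auto simp: planAB_def ennreal_plus distrib_right\<close>)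
    have e2: "(\<Sum>x\<in>S. ennreal (X1 x + X2 x) * lE x) = (\<Sum>x\<in>S. ennreal (X1 x) * lE x) + (\<Sum>x\<in>S. ennreal (X2 x) * lE x)"
      unfolding sum.distrib[symmetric]
      by (rule sum.cong) (use p1(1) p2(1) in \<open>auto simp: planAB_def ennreal_plus distrib_right\<close>)
    have e3: "(\<Sum>x\<in>S. ennreal (Y1 x + Y2 x) * lE x) = (\<Sum>x\<in>S. ennreal (Y1 x) * lE x) + (\<Sum>x\<in>S. ennreal (Y2 x) * lE x)"
      unfolding sum.distrib[symmetric]
      by (rule sum.cong) (use p1(1) p2(1) in \<open>auto simp: planAB_def ennreal_plus distrib_right\<close>)
    show ?thesis unfolding costE_def e1 e2 e3 p1(2) p2(2) by (simp add: ac_simps)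
  qed
  then show "WS S (\<lambda>x. a x + b x) (\<lambda>x. c x + d x) \<le> u + v" using WE_le[OF p] by simp
qed
  then show ?thesis by (simp only: WE_def)
qed


lemma WS_pos_aux:
  assumes fin: "finite S" and nd: "\<forall>x\<in>S. snd x \<noteq> ereal (fst x)" and pS: "p \<in> S"
    and lt: "\<nu> p < \<mu> p"
  shows "0 < WS S \<mu> \<nu>"
proof -
  define M where "M = {dE x y | x y. x \<in> S \<and> y \<in> S \<and> x \<noteq> y} \<union> lE ` S"
  have Mfin: "finite M"
  proof -
    have "{dE x y | x y. x \<in> S \<and> y \<in> S \<and> x \<noteq> y} \<subseteq> (\<lambda>(x,y). dE x y) ` (S \<times> S)" by auto
    then show ?thesis unfolding M_def using fin by (meson finite_SigmaI finite_UnI finite_imageI finite_subset)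
  qed
  have Mne: "M \<noteq> {}" unfolding M_def using pS by auto
  have Mpos: "\<forall>z\<in>M. 0 < z" unfolding M_def using dE_pos lE_pos nd by auto
  define m where "m = Min M"
  have m0: "0 < m" unfolding m_def using Mfin Mne Mpos by simp
  have md: "m \<le> dE p y" if "y \<in> S" "y \<noteq> p" for y
    unfolding m_def using Mfin that pS by (intro Min_le) (auto simp: M_def)
  have ml: "m \<le> lE p" unfolding m_def using Mfin pS by (intro Min_le) (auto simp: M_def)
  have "m * ennreal (\<mu> p - \<nu> p) \<le> WS S \<mu> \<nu>"
  proof (rule WE_ge)
    fix T X Y assume pl: "planAB S S \<mu> \<nu> T X Y"
    have Tn: "\<And>x y. x \<in> S \<Longrightarrow> y \<in> S \<Longrightarrow> 0 \<le> T x y" and Xn: "0 \<le> X p" using pl pS unfolding planAB_def by auto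
    have col: "Y p + (\<Sum>x\<in>S. T x p) = \<nu> p" and row: "X p + (\<Sum>y\<in>S. T p y) = \<mu> p"
      using pl pS unfolding planAB_def by auto
    have "T p p \<le> (\<Sum>x\<in>S. T x p)"
      by (rule member_le_sum) (use pS fin Tn in auto)
    moreover have "0 \<le> Y p" using pl pS unfolding planAB_def by auto
    ultimately have Tpp: "T p p \<le> \<nu> p" using col by linarith
    have rs: "(\<Sum>y\<in>S. T p y) = T p p + (\<Sum>y\<in>S-{p}. T p y)" using sum.remove[OF fin pS] by simp
    have "\<mu> p - \<nu> p \<le> X p + (\<Sum>y\<in>S-{p}. T p y)" using row rs Tpp by linarith
    then have "m * ennreal (\<mu> p - \<nu> p) \<le> m * ennreal (X p + (\<Sum>y\<in>S-{p}. T p y))"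
      by (intro mult_left_mono ennreal_leI) auto
    also have "\<dots> = ennreal (X p) * m + (\<Sum>y\<in>S-{p}. ennreal (T p y) * m)"
    proof -
      have "ennreal (X p + (\<Sum>y\<in>S-{p}. T p y)) = ennreal (X p) + (\<Sum>y\<in>S-{p}. ennreal (T p y))"
      proof -
        have "(\<Sum>y\<in>S-{p}. ennreal (T p y)) = ennreal (\<Sum>y\<in>S-{p}. T p y)"
          by (rule sum_ennreal) (use Tn pS in auto)
        moreover have "0 \<le> (\<Sum>y\<in>S-{p}. T p y)" by (rule sum_nonneg) (use Tn pS in auto)
        ultimately show ?thesis using Xn by (simp add: ennreal_plus)
      qed
      then show ?thesis by (simp add: distrib_left sum_distrib_left mult.commute)
    qed
    also have "\<dots> \<le> ennreal (X p) * lE p + (\<Sum>y\<in>S-{p}. ennreal (T p y) * dE p y)"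
      using md ml by (intro add_mono sum_mono mult_left_mono) auto
    also have "\<dots> \<le> costE S S T X Y"
    proof -
      have e: "(\<Sum>y\<in>S-{p}. ennreal (T p y) * dE p y) = (\<Sum>(x,y)\<in>{p} \<times> (S-{p}). ennreal (T x y) * dE x y)"
        by (simp add: sum.cartesian_product[symmetric])
      have "(\<Sum>(x,y)\<in>{p} \<times> (S-{p}). ennreal (T x y) * dE x y) \<le> (\<Sum>(x,y)\<in>S \<times> S. ennreal (T x y) * dE x y)"
        by (rule sum_mono2) (use fin pS in auto)
      moreover have "ennreal (X p) * lE p \<le> (\<Sum>x\<in>S. ennreal (X x) * lE x)"
        by (rule member_le_sum) (use pS fin in auto)
      ultimately have "ennreal (X p) * lE p + (\<Sum>(x,y)\<in>{p} \<times> (S-{p}). ennreal (T x y) * dE x y)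
         \<le> (\<Sum>x\<in>S. ennreal (X x) * lE x) + (\<Sum>(x,y)\<in>S \<times> S. ennreal (T x y) * dE x y)"
        by (intro add_mono)
      also have "\<dots> \<le> costE S S T X Y" unfolding costE_def
        by (rule add_increasing2) (auto simp: add.commute)
      finally show ?thesis unfolding e .
    qed
    finally show "m * ennreal (\<mu> p - \<nu> p) \<le> costE S S T X Y" .
  qed
  moreover have "0 < m * ennreal (\<mu> p - \<nu> p)" using m0 lt by (simp add: ennreal_zero_less_mult_iff)
  ultimately show ?thesis by order
qed


lemma split4:
  fixes f :: "pt \<Rightarrow> pt \<Rightarrow> 'b::comm_monoid_add"
  assumes fin: "finite S" and pS: "p \<in> S"
  shows "(\<Sum>(x,y)\<in>S \<times> S. f x y) = f p p + (\<Sum>y\<in>S-{p}. f p y) + (\<Sum>x\<in>S-{p}. f x p)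
     + (\<Sum>x\<in>S-{p}. \<Sum>y\<in>S-{p}. f x y)"
proof -
  have "(\<Sum>(x,y)\<in>S \<times> S. f x y) = (\<Sum>x\<in>S. \<Sum>y\<in>S. f x y)" by (simp add: sum.cartesian_product)
  also have "\<dots> = (\<Sum>x\<in>S. f x p + (\<Sum>y\<in>S-{p}. f x y))"
    by (rule sum.cong[OF refl]) (rule sum.remove[OF fin pS])
  also have "\<dots> = (\<Sum>x\<in>S. f x p) + (\<Sum>x\<in>S. \<Sum>y\<in>S-{p}. f x y)" by (simp add: sum.distrib)
  also have "\<dots> = (f p p + (\<Sum>x\<in>S-{p}. f x p)) + ((\<Sum>y\<in>S-{p}. f p y) + (\<Sum>x\<in>S-{p}. \<Sum>y\<in>S-{p}. f x y))"
    using sum.remove[OF fin pS, of "\<lambda>x. f x p"] sum.remove[OF fin pS, of "\<lambda>x. \<Sum>y\<in>S-{p}. f x y"] by simp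
  finally show ?thesis by (simp add: ac_simps)
qed

lemma key_ineq:
  fixes a b l Dxp Dpy :: "pt \<Rightarrow> ennreal" and D :: "pt \<Rightarrow> pt \<Rightarrow> ennreal" and aD bD K U V lp :: ennreal
  assumes U: "U = K * (aD + (\<Sum>y\<in>S'. a y))" and V: "V = K * (bD + (\<Sum>x\<in>S'. b x))"
    and tri: "\<And>x y. D x y \<le> Dxp x + Dpy y"
    and l1: "\<And>x. l x \<le> Dxp x + lp" and l2: "\<And>y. l y \<le> lp + Dpy y"
  shows "(\<Sum>x\<in>S'. \<Sum>y\<in>S'. K * b x * a y * D x y) + (\<Sum>x\<in>S'. K * b x * aD * l x) + (\<Sum>y\<in>S'. K * bD * a y * l y)
     \<le> V * (\<Sum>y\<in>S'. a y * Dpy y) + U * (\<Sum>x\<in>S'. b x * Dxp x) + V * aD * lp + U * bD * lp"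
proof -
  define P where "P = (\<Sum>x\<in>S'. b x * Dxp x)"
  define Q where "Q = (\<Sum>y\<in>S'. a y * Dpy y)"
  define SA where "SA = (\<Sum>y\<in>S'. a y)"
  define SB where "SB = (\<Sum>x\<in>S'. b x)"
  have i1: "(\<Sum>x\<in>S'. \<Sum>y\<in>S'. K * b x * a y * D x y) \<le> K * (P * SA + SB * Q)"
  proof -
    have "(\<Sum>x\<in>S'. \<Sum>y\<in>S'. K * b x * a y * D x y) \<le> (\<Sum>x\<in>S'. \<Sum>y\<in>S'. K * b x * a y * (Dxp x + Dpy y))"
      by (intro sum_mono mult_left_mono tri) auto
    also have "\<dots> = (\<Sum>x\<in>S'. \<Sum>y\<in>S'. K * (b x * Dxp x) * a y + K * b x * (a y * Dpy y))"
      by (simp add: distrib_left mult_ac)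
    also have "\<dots> = (\<Sum>x\<in>S'. K * (b x * Dxp x) * SA + K * b x * Q)"
      by (rule sum.cong[OF refl]) (simp add: SA_def Q_def sum.distrib sum_distrib_left mult_ac)
    also have "\<dots> = K * (P * SA + SB * Q)"
      by (simp add: P_def SB_def sum.distrib sum_distrib_left sum_distrib_right distrib_left mult_ac)
    finally show ?thesis .
  qed
  have i2: "(\<Sum>x\<in>S'. K * b x * aD * l x) \<le> K * (aD * P + aD * lp * SB)"
  proof -
    have "(\<Sum>x\<in>S'. K * b x * aD * l x) \<le> (\<Sum>x\<in>S'. K * b x * aD * (Dxp x + lp))"
      by (intro sum_mono mult_left_mono l1) auto
    also have "\<dots> = K * (aD * P + aD * lp * SB)"
      by (simp add: P_def SB_def sum.distrib sum_distrib_left sum_distrib_right distrib_left mult_ac)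
    finally show ?thesis .
  qed
  have i3: "(\<Sum>y\<in>S'. K * bD * a y * l y) \<le> K * (bD * lp * SA + bD * Q)"
  proof -
    have "(\<Sum>y\<in>S'. K * bD * a y * l y) \<le> (\<Sum>y\<in>S'. K * bD * a y * (lp + Dpy y))"
      by (intro sum_mono mult_left_mono l2) auto
    also have "\<dots> = K * (bD * lp * SA + bD * Q)"
      by (simp add: Q_def SA_def sum.distrib sum_distrib_left sum_distrib_right distrib_left mult_ac)
    finally show ?thesis .
  qed
  have "K * (P * SA + SB * Q) + K * (aD * P + aD * lp * SB) + K * (bD * lp * SA + bD * Q)
     = (K * (aD + SA)) * P + (K * (bD + SB)) * Q + K * aD * lp * SB + K * bD * lp * SA"
    by (simp add: algebra_simps)
  also have "\<dots> \<le> (K * (aD + SA)) * P + (K * (bD + SB)) * Q + K * aD * lp * (bD + SB) + K * bD * lp * (aD + SA)"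
    by (intro add_mono mult_left_mono order_refl) (auto simp: add_increasing)
  also have "\<dots> = V * Q + U * P + V * aD * lp + U * bD * lp"
    unfolding U V SA_def SB_def by (simp add: algebra_simps)
  finally have "K * (P * SA + SB * Q) + K * (aD * P + aD * lp * SB) + K * (bD * lp * SA + bD * Q)
     \<le> V * Q + U * P + V * aD * lp + U * bD * lp" .
  with i1 i2 i3 show ?thesis unfolding P_def Q_def
    by (meson add_mono order_trans)
qed


lemma cancel_plan:
  assumes fin: "finite S" and pS: "p \<in> S" and c: "0 \<le> c" and ap: "0 \<le> \<alpha> p" and bp: "0 \<le> \<beta> p"
    and pl: "planAB S S (\<lambda>x. \<alpha> x + (if x = p then c else 0)) (\<lambda>x. \<beta> x + (if x = p then c else 0)) T X Y"
  shows "\<exists>T' X' Y'. planAB S S \<alpha> \<beta> T' X' Y' \<and> costE S S T' X' Y' \<le> costE S S T X Y"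
proof -
  define S' where "S' = S - {p}"
  have finS': "finite S'" using fin by (simp add: S'_def)
  have Tn: "\<And>x y. x \<in> S \<Longrightarrow> y \<in> S \<Longrightarrow> 0 \<le> T x y" and Xn: "\<And>x. x \<in> S \<Longrightarrow> 0 \<le> X x"
    and Yn: "\<And>y. y \<in> S \<Longrightarrow> 0 \<le> Y y" using pl unfolding planAB_def by auto
  have row: "\<And>x. x \<in> S \<Longrightarrow> X x + (\<Sum>y\<in>S. T x y) = \<alpha> x + (if x = p then c else 0)"
    and col: "\<And>y. y \<in> S \<Longrightarrow> Y y + (\<Sum>x\<in>S. T x y) = \<beta> y + (if y = p then c else 0)"
    using pl unfolding planAB_def by auto
  have rem: "\<And>g :: pt \<Rightarrow> real. (\<Sum>y\<in>S. g y) = g p + (\<Sum>y\<in>S'. g y)"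
    unfolding S'_def using sum.remove[OF fin pS] by blast
  have S'S: "\<And>x. x \<in> S' \<Longrightarrow> x \<in> S \<and> x \<noteq> p" unfolding S'_def by auto
  show ?thesis
  proof (cases "c \<le> T p p")
    case True
    define T' where "T' = (\<lambda>x y. if x = p \<and> y = p then T p p - c else T x y)"
    have "planAB S S \<alpha> \<beta> T' X Y"
      unfolding planAB_def
    proof (intro conjI ballI)
      fix x y assume "x \<in> S" "y \<in> S"
      then show "0 \<le> T' x y" using Tn True by (auto simp: T'_def)
    next
      fix x assume x: "x \<in> S"
      show "X x + (\<Sum>y\<in>S. T' x y) = \<alpha> x"
      proof (cases "x = p")
        case True
        have "(\<Sum>y\<in>S'. T' x y) = (\<Sum>y\<in>S'. T x y)" by (rule sum.cong) (auto simp: T'_def dest: S'S)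
        then show ?thesis using row[OF x] rem[of "T' x"] rem[of "T x"] True by (simp add: T'_def)
      next
        case False
        then show ?thesis using row[OF x] by (simp add: T'_def)
      qed
    next
      fix y assume y: "y \<in> S"
      show "Y y + (\<Sum>x\<in>S. T' x y) = \<beta> y"
      proof (cases "y = p")
        case True
        have "(\<Sum>x\<in>S'. T' x y) = (\<Sum>x\<in>S'. T x y)" by (rule sum.cong) (auto simp: T'_def dest: S'S)
        then show ?thesis using col[OF y] rem[of "\<lambda>x. T' x y"] rem[of "\<lambda>x. T x y"] True by (simp add: T'_def)
      next
        case False
        then show ?thesis using col[OF y] by (simp add: T'_def)
      qed
    qed (use Xn Yn in auto)
    moreover have "costE S S T' X Y = costE S S T X Y"
    proof -
      have "(\<Sum>(x,y)\<in>S \<times> S. ennreal (T' x y) * dE x y) = (\<Sum>(x,y)\<in>S \<times> S. ennreal (T x y) * dE x y)"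
        by (rule sum.cong) (auto simp: T'_def)
      then show ?thesis unfolding costE_def by simp
    qed
    ultimately show ?thesis by (metis order_refl)
  next
    case False
    define c' where "c' = c - T p p"
    define A where "A = X p + (\<Sum>y\<in>S'. T p y)"
    define B where "B = Y p + (\<Sum>x\<in>S'. T x p)"
    have c'pos: "0 < c'" using False by (simp add: c'_def)
    have Aeq: "A = \<alpha> p + c - T p p" using row[OF pS] rem[of "T p"] by (simp add: A_def)
    have Beq: "B = \<beta> p + c - T p p" using col[OF pS] rem[of "\<lambda>x. T x p"] by (simp add: B_def)
    have Ac: "c' \<le> A" using Aeq ap by (simp add: c'_def)
    have Bc: "c' \<le> B" using Beq bp by (simp add: c'_def)
    have Apos: "0 < A" and Bpos: "0 < B" using Ac Bc c'pos by linarith+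
    define k where "k = c' / (A * B)"
    define u where "u = k * A"
    define v where "v = k * B"
    have k0: "0 \<le> k" using c'pos Apos Bpos by (simp add: k_def)
    have u_eq: "u = c' / B" using Apos by (simp add: u_def k_def)
    have v_eq: "v = c' / A" using Bpos by (simp add: v_def k_def)
    have u01: "0 \<le> u" "u \<le> 1" using u_eq c'pos Bc Bpos by (auto simp: divide_le_eq_1)
    have v01: "0 \<le> v" "v \<le> 1" using v_eq c'pos Ac Apos by (auto simp: divide_le_eq_1)
    have vA: "v * A = c'" using v_eq Apos by simp
    have uB: "u * B = c'" using u_eq Bpos by simp
    define T' where "T' = (\<lambda>x y. if x = p \<and> y = p then 0 else if x = p then (1 - v) * T p y
        else if y = p then (1 - u) * T x p else T x y + k * T x p * T p y)"
    define X' where "X' = (\<lambda>x. if x = p then (1 - v) * X p else X x + k * T x p * X p)"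
    define Y' where "Y' = (\<lambda>y. if y = p then (1 - u) * Y p else Y y + k * Y p * T p y)"
    have plan': "planAB S S \<alpha> \<beta> T' X' Y'"
      unfolding planAB_def
    proof (intro conjI ballI)
      fix x y assume "x \<in> S" "y \<in> S"
      then show "0 \<le> T' x y" using Tn pS u01 v01 k0 by (auto simp: T'_def)
    next
      fix x assume "x \<in> S" then show "0 \<le> X' x" using Tn Xn pS v01 k0 by (auto simp: X'_def)
    next
      fix y assume "y \<in> S" then show "0 \<le> Y' y" using Tn Yn pS u01 k0 by (auto simp: Y'_def)
    next
      fix x assume x: "x \<in> S"
      show "X' x + (\<Sum>y\<in>S. T' x y) = \<alpha> x"
      proof (cases "x = p")
        case True
        have "(\<Sum>y\<in>S'. T' x y) = (\<Sum>y\<in>S'. (1 - v) * T p y)" by (rule sum.cong) (auto simp: T'_def True dest: S'S)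
        then have "(\<Sum>y\<in>S. T' x y) = (1 - v) * (\<Sum>y\<in>S'. T p y)"
          using rem[of "T' x"] True by (simp add: T'_def sum_distrib_left)
        then have "X' x + (\<Sum>y\<in>S. T' x y) = (1 - v) * A" using True by (simp add: X'_def A_def algebra_simps)
        then show ?thesis using vA Aeq True by (simp add: c'_def algebra_simps)
      next
        case xp: False
        have "(\<Sum>y\<in>S'. T' x y) = (\<Sum>y\<in>S'. T x y + k * T x p * T p y)"
          by (rule sum.cong) (auto simp: T'_def xp dest: S'S)
        then have "(\<Sum>y\<in>S. T' x y) = (1 - u) * T x p + (\<Sum>y\<in>S'. T x y) + k * T x p * (\<Sum>y\<in>S'. T p y)"
          using rem[of "T' x"] xp by (simp add: T'_def sum.distrib sum_distrib_left)
        moreover have "X x + T x p + (\<Sum>y\<in>S'. T x y) = \<alpha> x" using row[OF x] rem[of "T x"] xp by simp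
        ultimately have "X' x + (\<Sum>y\<in>S. T' x y) = \<alpha> x - u * T x p + k * T x p * A"
          using xp by (simp add: X'_def A_def algebra_simps)
        then show ?thesis by (simp add: u_def)
      qed
    next
      fix y assume y: "y \<in> S"
      show "Y' y + (\<Sum>x\<in>S. T' x y) = \<beta> y"
      proof (cases "y = p")
        case True
        have "(\<Sum>x\<in>S'. T' x y) = (\<Sum>x\<in>S'. (1 - u) * T x p)" by (rule sum.cong) (auto simp: T'_def True dest: S'S)
        then have "(\<Sum>x\<in>S. T' x y) = (1 - u) * (\<Sum>x\<in>S'. T x p)"
          using rem[of "\<lambda>x. T' x y"] True by (simp add: T'_def sum_distrib_left)
        then have "Y' y + (\<Sum>x\<in>S. T' x y) = (1 - u) * B" using True by (simp add: Y'_def B_def algebra_simps)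
        then show ?thesis using uB Beq True by (simp add: c'_def algebra_simps)
      next
        case yp: False
        have "(\<Sum>x\<in>S'. T' x y) = (\<Sum>x\<in>S'. T x y + k * T x p * T p y)"
          by (rule sum.cong) (auto simp: T'_def yp dest: S'S)
        then have "(\<Sum>x\<in>S. T' x y) = (1 - v) * T p y + (\<Sum>x\<in>S'. T x y) + k * T p y * (\<Sum>x\<in>S'. T x p)"
          using rem[of "\<lambda>x. T' x y"] yp by (simp add: T'_def sum.distrib sum_distrib_left sum_distrib_right mult_ac)
        moreover have "Y y + T p y + (\<Sum>x\<in>S'. T x y) = \<beta> y" using col[OF y] rem[of "\<lambda>x. T x y"] yp by simp
        ultimately have "Y' y + (\<Sum>x\<in>S. T' x y) = \<beta> y - v * T p y + k * T p y * B"
          using yp by (simp add: Y'_def B_def algebra_simps)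
        then show ?thesis by (simp add: v_def)
      qed
    qed
    have "costE S S T' X' Y' \<le> costE S S T X Y"
    proof -
      define a where "a = (\<lambda>y. ennreal (T p y))"
      define b where "b = (\<lambda>x. ennreal (T x p))"
      define aD where "aD = ennreal (X p)"
      define bD where "bD = ennreal (Y p)"
      define K where "K = ennreal k"
      define U where "U = ennreal u"
      define V where "V = ennreal v"
      define U' where "U' = ennreal (1 - u)"
      define V' where "V' = ennreal (1 - v)"
      define lp where "lp = lE p"
      define P where "P = (\<Sum>x\<in>S'. b x * dE x p)"
      define Q where "Q = (\<Sum>y\<in>S'. a y * dE p y)"
      define TT where "TT = (\<Sum>x\<in>S'. \<Sum>y\<in>S'. ennreal (T x y) * dE x y)"
      define XX where "XX = (\<Sum>x\<in>S'. ennreal (X x) * lE x)"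
      define YY where "YY = (\<Sum>y\<in>S'. ennreal (Y y) * lE y)"
      define AT where "AT = (\<Sum>x\<in>S'. \<Sum>y\<in>S'. K * b x * a y * dE x y)"
      define AX where "AX = (\<Sum>x\<in>S'. K * b x * aD * lE x)"
      define AY where "AY = (\<Sum>y\<in>S'. K * bD * a y * lE y)"
      have remE: "\<And>g :: pt \<Rightarrow> ennreal. (\<Sum>y\<in>S. g y) = g p + (\<Sum>y\<in>S'. g y)"
        unfolding S'_def using sum.remove[OF fin pS] by blast
      have sp4: "\<And>f :: pt \<Rightarrow> pt \<Rightarrow> ennreal. (\<Sum>(x,y)\<in>S \<times> S. f x y) = f p p + (\<Sum>y\<in>S'. f p y) + (\<Sum>x\<in>S'. f x p)
          + (\<Sum>x\<in>S'. \<Sum>y\<in>S'. f x y)"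
        unfolding S'_def by (rule split4[OF fin pS])
      have old: "costE S S T X Y = Q + P + TT + aD * lp + XX + bD * lp + YY"
        unfolding costE_def sp4 remE by (simp add: Q_def P_def TT_def a_def b_def aD_def bD_def lp_def XX_def YY_def ac_simps)
      have n1: "(\<Sum>y\<in>S'. ennreal (T' p y) * dE p y) = V' * Q"
        unfolding Q_def sum_distrib_left
      proof (rule sum.cong[OF refl])
        fix y assume "y \<in> S'"
        then have "y \<noteq> p" "0 \<le> T p y" using S'S Tn pS by auto
        then show "ennreal (T' p y) * dE p y = V' * (a y * dE p y)"
          using v01 by (simp add: T'_def V'_def a_def ennreal_mult mult_ac)
      qed
      have n2: "(\<Sum>x\<in>S'. ennreal (T' x p) * dE x p) = U' * P"
        unfolding P_def sum_distrib_left
      proof (rule sum.cong[OF refl])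
        fix x assume "x \<in> S'"
        then have "x \<noteq> p" "0 \<le> T x p" using S'S Tn pS by auto
        then show "ennreal (T' x p) * dE x p = U' * (b x * dE x p)"
          using u01 by (simp add: T'_def U'_def b_def ennreal_mult mult_ac)
      qed
      have n3: "(\<Sum>x\<in>S'. \<Sum>y\<in>S'. ennreal (T' x y) * dE x y) = TT + AT"
      proof -
        have "(\<Sum>x\<in>S'. \<Sum>y\<in>S'. ennreal (T' x y) * dE x y) =
          (\<Sum>x\<in>S'. \<Sum>y\<in>S'. ennreal (T x y) * dE x y + K * b x * a y * dE x y)"
        proof (intro sum.cong refl)
          fix x y assume x: "x \<in> S'" and y: "y \<in> S'"
          have "ennreal (T' x y) = ennreal (T x y) + K * b x * a y"
            using x y S'S Tn pS k0 by (simp add: T'_def K_def a_def b_def ennreal_plus ennreal_mult)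
          then show "ennreal (T' x y) * dE x y = ennreal (T x y) * dE x y + K * b x * a y * dE x y"
            by (simp add: distrib_right)
        qed
        then show ?thesis by (simp add: TT_def AT_def sum.distrib)
      qed
      have n4: "(\<Sum>x\<in>S'. ennreal (X' x) * lE x) = XX + AX"
      proof -
        have "(\<Sum>x\<in>S'. ennreal (X' x) * lE x) = (\<Sum>x\<in>S'. ennreal (X x) * lE x + K * b x * aD * lE x)"
        proof (intro sum.cong refl)
          fix x assume x: "x \<in> S'"
          have "ennreal (X' x) = ennreal (X x) + K * b x * aD"
            using x S'S Tn Xn pS k0 by (simp add: X'_def K_def aD_def b_def ennreal_plus ennreal_mult)
          then show "ennreal (X' x) * lE x = ennreal (X x) * lE x + K * b x * aD * lE x"
            by (simp add: distrib_right)
        qed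
        then show ?thesis by (simp add: XX_def AX_def sum.distrib)
      qed
      have n5: "(\<Sum>y\<in>S'. ennreal (Y' y) * lE y) = YY + AY"
      proof -
        have "(\<Sum>y\<in>S'. ennreal (Y' y) * lE y) = (\<Sum>y\<in>S'. ennreal (Y y) * lE y + K * bD * a y * lE y)"
        proof (intro sum.cong refl)
          fix y assume y: "y \<in> S'"
          have "ennreal (Y' y) = ennreal (Y y) + K * bD * a y"
            using y S'S Tn Yn pS k0 by (simp add: Y'_def K_def bD_def a_def ennreal_plus ennreal_mult)
          then show "ennreal (Y' y) * lE y = ennreal (Y y) * lE y + K * bD * a y * lE y"
            by (simp add: distrib_right)
        qed
        then show ?thesis by (simp add: YY_def AY_def sum.distrib)
      qed
      have n6: "ennreal (X' p) = V' * aD" using v01 Xn pS by (simp add: X'_def V'_def aD_def ennreal_mult)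
      have n7: "ennreal (Y' p) = U' * bD" using u01 Yn pS by (simp add: Y'_def U'_def bD_def ennreal_mult)
      have new: "costE S S T' X' Y' = V' * Q + U' * P + (TT + AT) + V' * aD * lp + (XX + AX) + U' * bD * lp + (YY + AY)"
        unfolding costE_def sp4 remE n1 n2 n3 n4 n5 n6 n7 by (simp add: T'_def lp_def ac_simps)
      have sA: "ennreal A = aD + (\<Sum>y\<in>S'. a y)"
      proof -
        have "(\<Sum>y\<in>S'. a y) = ennreal (\<Sum>y\<in>S'. T p y)" unfolding a_def
          by (rule sum_ennreal) (use Tn pS S'S in auto)
        then show ?thesis using Xn pS Tn S'S by (simp add: A_def aD_def ennreal_plus sum_nonneg)
      qed
      have sB: "ennreal B = bD + (\<Sum>x\<in>S'. b x)"
      proof -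
        have "(\<Sum>x\<in>S'. b x) = ennreal (\<Sum>x\<in>S'. T x p)" unfolding b_def
          by (rule sum_ennreal) (use Tn pS S'S in auto)
        then show ?thesis using Yn pS Tn S'S by (simp add: B_def bD_def ennreal_plus sum_nonneg)
      qed
      have UK: "U = K * (aD + (\<Sum>y\<in>S'. a y))" unfolding U_def u_def K_def sA[symmetric]
        using k0 Apos by (simp add: ennreal_mult)
      have VK: "V = K * (bD + (\<Sum>x\<in>S'. b x))" unfolding V_def v_def K_def sB[symmetric]
        using k0 Bpos by (simp add: ennreal_mult)
      have added: "AT + AX + AY \<le> V * Q + U * P + V * aD * lp + U * bD * lp"
        unfolding AT_def AX_def AY_def Q_def P_def lp_def
        by (rule key_ineq[OF UK VK]) (auto intro: dE_tri lE_tri lE_tri')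
      have VV: "V' + V = 1" using v01 by (simp add: V'_def V_def flip: ennreal_plus)
      have UU: "U' + U = 1" using u01 by (simp add: U'_def U_def flip: ennreal_plus)
      have "costE S S T' X' Y' = (V' * Q + U' * P + TT + V' * aD * lp + XX + U' * bD * lp + YY) + (AT + AX + AY)"
        unfolding new by (simp add: ac_simps)
      also have "\<dots> \<le> (V' * Q + U' * P + TT + V' * aD * lp + XX + U' * bD * lp + YY) + (V * Q + U * P + V * aD * lp + U * bD * lp)"
        by (rule add_left_mono[OF added])
      also have "\<dots> = (V' + V) * Q + (U' + U) * P + TT + (V' + V) * aD * lp + XX + (U' + U) * bD * lp + YY"
        by (simp add: algebra_simps)
      also have "\<dots> = costE S S T X Y" unfolding old VV UU by simp
      finally show ?thesis .
    qed
    then show ?thesis using plan' by blast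
  qed
qed


lemma WS_cancel1:
  assumes fin: "finite S" and pS: "p \<in> S" and c: "0 \<le> c" and ap: "0 \<le> \<alpha> p" and bp: "0 \<le> \<beta> p"
  shows "WS S \<alpha> \<beta> \<le> WS S (\<lambda>x. \<alpha> x + (if x = p then c else 0)) (\<lambda>x. \<beta> x + (if x = p then c else 0))"
proof (rule WE_ge)
  fix T X Y assume "planAB S S (\<lambda>x. \<alpha> x + (if x = p then c else 0)) (\<lambda>x. \<beta> x + (if x = p then c else 0)) T X Y"
  from cancel_plan[OF fin pS c ap bp this] obtain T' X' Y' where
    "planAB S S \<alpha> \<beta> T' X' Y'" "costE S S T' X' Y' \<le> costE S S T X Y" by blast
  then show "WS S \<alpha> \<beta> \<le> costE S S T X Y" using WE_le order_trans by blast
qed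

lemma WS_cancel:
  assumes fin: "finite S" and an: "\<forall>x\<in>S. 0 \<le> \<alpha> x" and bn: "\<forall>x\<in>S. 0 \<le> \<beta> x" and kn: "\<forall>x. 0 \<le> \<kappa> x"
    and KS: "K \<subseteq> S"
  shows "WS S \<alpha> \<beta> \<le> WS S (\<lambda>x. \<alpha> x + (if x \<in> K then \<kappa> x else 0)) (\<lambda>x. \<beta> x + (if x \<in> K then \<kappa> x else 0))"
proof -
  have "finite K" using fin KS finite_subset by blast
  then show ?thesis using KS
  proof (induction K rule: finite_induct)
    case empty
    then show ?case by simp
  next
    case (insert q K)
    define \<alpha>' where "\<alpha>' = (\<lambda>x. \<alpha> x + (if x \<in> K then \<kappa> x else 0))"
    define \<beta>' where "\<beta>' = (\<lambda>x. \<beta> x + (if x \<in> K then \<kappa> x else 0))"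
    have qS: "q \<in> S" using insert by auto
    have IH: "WS S \<alpha> \<beta> \<le> WS S \<alpha>' \<beta>'" using insert unfolding \<alpha>'_def \<beta>'_def by auto
    have "WS S \<alpha>' \<beta>' \<le> WS S (\<lambda>x. \<alpha>' x + (if x = q then \<kappa> q else 0)) (\<lambda>x. \<beta>' x + (if x = q then \<kappa> q else 0))"
      by (rule WS_cancel1[OF fin qS]) (use kn an bn qS in \<open>auto simp: \<alpha>'_def \<beta>'_def add_nonneg_nonneg\<close>)
    moreover have "(\<lambda>x. \<alpha>' x + (if x = q then \<kappa> q else 0)) = (\<lambda>x. \<alpha> x + (if x \<in> insert q K then \<kappa> x else 0))"
      using insert(2) by (auto simp: \<alpha>'_def fun_eq_iff)
    moreover have "(\<lambda>x. \<beta>' x + (if x = q then \<kappa> q else 0)) = (\<lambda>x. \<beta> x + (if x \<in> insert q K then \<kappa> x else 0))"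
      using insert(2) by (auto simp: \<beta>'_def fun_eq_iff)
    ultimately show ?case using IH by simp
  qed
qed

lemma pospart_nonneg: "0 \<le> pospart f x" unfolding pospart_def by simp
lemma negpart_nonneg: "0 \<le> negpart f x" unfolding negpart_def by simp
lemma pos_minus_neg: "pospart f x - negpart f x = f x" unfolding pospart_def negpart_def by auto
lemma pos_neg_zero: "x \<notin> supp f \<Longrightarrow> pospart f x = 0 \<and> negpart f x = 0"
  unfolding pospart_def negpart_def supp_def by auto

lemma supp_pn: "supp (\<lambda>x. pospart f x + negpart g x) \<subseteq> supp f \<union> supp g"
  using pos_neg_zero[of _ f] pos_neg_zero[of _ g] unfolding supp_def by fastforce
lemma supp_np: "supp (\<lambda>x. negpart f x + pospart g x) \<subseteq> supp f \<union> supp g"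
  using pos_neg_zero[of _ f] pos_neg_zero[of _ g] unfolding supp_def by fastforce

lemma W1pm_WS:
  assumes "finite S" "supp f \<subseteq> S" "supp g \<subseteq> S"
  shows "W1pm f g = enn2ereal (WS S (\<lambda>x. pospart f x + negpart g x) (\<lambda>x. negpart f x + pospart g x))"
proof -
  have a: "supp (\<lambda>x. pospart f x + negpart g x) \<subseteq> S" using supp_pn assms by blast
  have b: "supp (\<lambda>x. negpart f x + pospart g x) \<subseteq> S" using supp_np assms by blast
  show ?thesis unfolding W1pm_def W1_WE
    by (subst WE_enlarge[OF assms(1) assms(1) a b order_refl order_refl]) simp
qed

theorem mainTheorem12:
  fixes \<xi> \<eta> \<zeta> :: "pt \<Rightarrow> real"
  assumes "admissible \<xi>" and "admissible \<eta>" and "admissible \<zeta>"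
  shows "W1pm \<xi> \<eta> \<ge> 0 \<and> (W1pm \<xi> \<eta> > 0 \<longleftrightarrow> \<xi> \<noteq> \<eta>)
    \<and> W1pm \<xi> \<eta> = W1pm \<eta> \<xi>
    \<and> W1pm \<xi> \<eta> + W1pm \<eta> \<zeta> \<ge> W1pm \<xi> \<zeta>"
proof -
  define S where "S = supp \<xi> \<union> supp \<eta> \<union> supp \<zeta>"
  have fin: "finite S" using assms unfolding S_def admissible_def by auto
  have nd: "\<forall>x\<in>S. snd x \<noteq> ereal (fst x)" using assms unfolding S_def admissible_def by auto
  have s1: "supp \<xi> \<subseteq> S" and s2: "supp \<eta> \<subseteq> S" and s3: "supp \<zeta> \<subseteq> S" unfolding S_def by auto
  define PN where "PN = (\<lambda>f g x. pospart f x + negpart g x)"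
  define NP where "NP = (\<lambda>f g x. negpart f x + pospart g x)"
  have WPN: "\<And>f g. supp f \<subseteq> S \<Longrightarrow> supp g \<subseteq> S \<Longrightarrow> W1pm f g = enn2ereal (WS S (PN f g) (NP f g))"
    unfolding PN_def NP_def using W1pm_WS[OF fin] by blast
  have PNn: "\<And>f g x. 0 \<le> PN f g x" and NPn: "\<And>f g x. 0 \<le> NP f g x"
    unfolding PN_def NP_def by (simp_all add: pospart_nonneg negpart_nonneg)
  have e12: "W1pm \<xi> \<eta> = enn2ereal (WS S (PN \<xi> \<eta>) (NP \<xi> \<eta>))" using WPN s1 s2 by blast
  have e21: "W1pm \<eta> \<xi> = enn2ereal (WS S (PN \<eta> \<xi>) (NP \<eta> \<xi>))" using WPN s1 s2 by blast
  have e23: "W1pm \<eta> \<zeta> = enn2ereal (WS S (PN \<eta> \<zeta>) (NP \<eta> \<zeta>))" using WPN s2 s3 by blast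
  have e13: "W1pm \<xi> \<zeta> = enn2ereal (WS S (PN \<xi> \<zeta>) (NP \<xi> \<zeta>))" using WPN s1 s3 by blast
  have P1: "W1pm \<xi> \<eta> \<ge> 0" by (simp add: e12)
  have P2: "W1pm \<xi> \<eta> > 0 \<longleftrightarrow> \<xi> \<noteq> \<eta>"
  proof
    assume "0 < W1pm \<xi> \<eta>"
    moreover have "\<xi> = \<eta> \<Longrightarrow> WS S (PN \<xi> \<eta>) (NP \<xi> \<eta>) = 0"
      using WS_self[OF fin] PNn by (simp add: PN_def NP_def add.commute)
    ultimately show "\<xi> \<noteq> \<eta>" using e12 by (auto simp: zero_ennreal.rep_eq)
  next
    assume "\<xi> \<noteq> \<eta>"
    then obtain p where p: "\<xi> p \<noteq> \<eta> p" by blast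
    then have "\<xi> p \<noteq> 0 \<or> \<eta> p \<noteq> 0" by auto
    then have pS: "p \<in> S" using s1 s2 unfolding supp_def by blast
    have d: "PN \<xi> \<eta> p - NP \<xi> \<eta> p = \<xi> p - \<eta> p"
      using pos_minus_neg[of \<xi> p] pos_minus_neg[of \<eta> p] by (simp add: PN_def NP_def)
    have "0 < WS S (PN \<xi> \<eta>) (NP \<xi> \<eta>)"
    proof (cases "\<xi> p > \<eta> p")
      case True
      then show ?thesis using WS_pos_aux[OF fin nd pS] d by simp
    next
      case False
      then have "NP \<xi> \<eta> p > PN \<xi> \<eta> p" using p d by simp
      then show ?thesis using WS_pos_aux[OF fin nd pS] WS_sym[OF fin] by metis
    qed
    then show "0 < W1pm \<xi> \<eta>" using e12 by (metis less_ennreal.rep_eq zero_ennreal.rep_eq)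
  qed
  have P3: "W1pm \<xi> \<eta> = W1pm \<eta> \<xi>"
  proof -
    have "PN \<eta> \<xi> = NP \<xi> \<eta>" "NP \<eta> \<xi> = PN \<xi> \<eta>" by (auto simp: PN_def NP_def fun_eq_iff)
    then show ?thesis using e12 e21 WS_sym[OF fin] by simp
  qed
  have P4: "W1pm \<xi> \<zeta> \<le> W1pm \<xi> \<eta> + W1pm \<eta> \<zeta>"
  proof -
    define \<kappa> where "\<kappa> = (\<lambda>x. pospart \<eta> x + negpart \<eta> x)"
    have kn: "\<forall>x. 0 \<le> \<kappa> x" unfolding \<kappa>_def by (simp add: pospart_nonneg negpart_nonneg)
    have k0: "\<kappa> x = 0" if "x \<notin> S" for x
    proof -
      have "x \<notin> supp \<eta>" using that s2 by blast
      then show ?thesis using pos_neg_zero[of x \<eta>] by (simp add: \<kappa>_def)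
    qed
    have "WS S (PN \<xi> \<zeta>) (NP \<xi> \<zeta>) \<le> WS S (\<lambda>x. PN \<xi> \<zeta> x + (if x \<in> S then \<kappa> x else 0)) (\<lambda>x. NP \<xi> \<zeta> x + (if x \<in> S then \<kappa> x else 0))"
      by (rule WS_cancel[OF fin _ _ kn order_refl]) (simp_all add: PNn NPn)
    also have "(\<lambda>x. PN \<xi> \<zeta> x + (if x \<in> S then \<kappa> x else 0)) = (\<lambda>x. PN \<xi> \<zeta> x + \<kappa> x)"
      using k0 by (auto simp: fun_eq_iff)
    also have "\<dots> = (\<lambda>x. PN \<xi> \<eta> x + PN \<eta> \<zeta> x)"
      by (simp add: fun_eq_iff PN_def \<kappa>_def algebra_simps)
    also have "(\<lambda>x. NP \<xi> \<zeta> x + (if x \<in> S then \<kappa> x else 0)) = (\<lambda>x. NP \<xi> \<zeta> x + \<kappa> x)"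
      using k0 by (auto simp: fun_eq_iff)
    also have "\<dots> = (\<lambda>x. NP \<xi> \<eta> x + NP \<eta> \<zeta> x)"
      by (simp add: fun_eq_iff NP_def \<kappa>_def algebra_simps)
    also have "WS S (\<lambda>x. PN \<xi> \<eta> x + PN \<eta> \<zeta> x) (\<lambda>x. NP \<xi> \<eta> x + NP \<eta> \<zeta> x)
       \<le> WS S (PN \<xi> \<eta>) (NP \<xi> \<eta>) + WS S (PN \<eta> \<zeta>) (NP \<eta> \<zeta>)"
      by (rule WS_add[OF fin])
    finally have "WS S (PN \<xi> \<zeta>) (NP \<xi> \<zeta>) \<le> WS S (PN \<xi> \<eta>) (NP \<xi> \<eta>) + WS S (PN \<eta> \<zeta>) (NP \<eta> \<zeta>)" .
    then show ?thesis unfolding e12 e23 e13 by (simp add: less_eq_ennreal.rep_eq plus_ennreal.rep_eq)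
  qed
  show ?thesis using P1 P2 P3 P4 by simp
qed

end
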